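(* Let $R$ be an integral domain which is a Hilbert ring. Then every maximal ideal of $R[X]$ is power stable. In particular, for a field $K$, every maximal ideal $M$ of $K[X_1,\dots,X_n]$ satisfies $M^t\cap K[X_1,\dots,X_{n-1}] = (M\cap K[X_1,\dots,X_{n-1}])^t$ for all $t\geq 1$.
   Context: A ring is a Hilbert ring if every prime ideal is an intersection of maximal ideals. An ideal $I$ of the polynomial ring $R[X]$ over an integral domain $R$ is called power stable if $I^t\cap R = (I\cap R)^t$ for all integers $t\geq 1$. *)

theory Defs
  imports "HOL-Computational_Algebra.Polynomial"
begin

definition is_ideal :: "'a::comm_ring_1 set \<Rightarrow> bool" where
  "is_ideal I \<longleftrightarrow> 0 \<in> I \<and> (\<forall>x\<in>I. \<forall>y\<in>I. x + y \<in> I) \<and> (\<forall>r. \<forall>x\<in>I. r * x \<in> I)"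

definition prime_ideal :: "'a::comm_ring_1 set \<Rightarrow> bool" where
  "prime_ideal P \<longleftrightarrow> is_ideal P \<and> P \<noteq> UNIV \<and> (\<forall>a b. a * b \<in> P \<longrightarrow> a \<in> P \<or> b \<in> P)"

definition maximal_ideal :: "'a::comm_ring_1 set \<Rightarrow> bool" where
  "maximal_ideal M \<longleftrightarrow> is_ideal M \<and> M \<noteq> UNIV \<and>
     (\<forall>J. is_ideal J \<and> M \<subseteq> J \<longrightarrow> J = M \<or> J = UNIV)"

definition hilbert_ring :: "'a::comm_ring_1 itself \<Rightarrow> bool" where
  "hilbert_ring _ \<longleftrightarrow> (\<forall>P::'a set. prime_ideal P \<longrightarrow>
      (\<exists>\<M>. (\<forall>M\<in>\<M>. maximal_ideal M) \<and> P = \<Inter>\<M>))"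

definition ideal_gen :: "'a::comm_ring_1 set \<Rightarrow> 'a set" where
  "ideal_gen S = \<Inter>{I. is_ideal I \<and> S \<subseteq> I}"

definition ideal_prod :: "'a::comm_ring_1 set \<Rightarrow> 'a set \<Rightarrow> 'a set" where
  "ideal_prod I J = ideal_gen {a * b | a b. a \<in> I \<and> b \<in> J}"

primrec ideal_pow :: "'a::comm_ring_1 set \<Rightarrow> nat \<Rightarrow> 'a set" where
  "ideal_pow I 0 = UNIV"
| "ideal_pow I (Suc n) = ideal_prod I (ideal_pow I n)"

definition contract :: "'a::comm_ring_1 poly set \<Rightarrow> 'a set" where
  "contract I = {a. [:a:] \<in> I}"

definition power_stable :: "'a::idom poly set \<Rightarrow> bool" where
  "power_stable I \<longleftrightarrow> (\<forall>t::nat. t \<ge> 1 \<longrightarrow> contract (ideal_pow I t) = ideal_pow (contract I) t)"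

end

theory Submission
  imports Defs
begin

lemma ideal_0: "is_ideal I \<Longrightarrow> 0 \<in> I" by (simp add: is_ideal_def)
lemma ideal_add: "is_ideal I \<Longrightarrow> x \<in> I \<Longrightarrow> y \<in> I \<Longrightarrow> x + y \<in> I" by (simp add: is_ideal_def)
lemma ideal_multL: "is_ideal I \<Longrightarrow> x \<in> I \<Longrightarrow> r * x \<in> I" by (simp add: is_ideal_def)
lemma ideal_multR: "is_ideal I \<Longrightarrow> x \<in> I \<Longrightarrow> x * r \<in> I"
  by (metis ideal_multL mult.commute)
lemma ideal_neg: "is_ideal I \<Longrightarrow> x \<in> I \<Longrightarrow> - x \<in> I"
  using ideal_multL[of I x "-1"] by simp
lemma ideal_diff: "is_ideal I \<Longrightarrow> x \<in> I \<Longrightarrow> y \<in> I \<Longrightarrow> x - y \<in> I"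
  using ideal_add[of I x "-y"] ideal_neg[of I y] by simp
lemma ideal_sum: "is_ideal I \<Longrightarrow> (\<And>i. i \<in> A \<Longrightarrow> f i \<in> I) \<Longrightarrow> sum f A \<in> I"
  by (induction A rule: infinite_finite_induct) (auto intro: ideal_0 ideal_add)
lemma ideal_UNIV: "is_ideal UNIV" by (simp add: is_ideal_def)
lemma ideal_one: "is_ideal I \<Longrightarrow> 1 \<in> I \<Longrightarrow> I = UNIV"
  using ideal_multR[of I 1] by auto

lemma ideal_gen_ideal: "is_ideal (ideal_gen S)"
  unfolding ideal_gen_def is_ideal_def by auto
lemma ideal_gen_sup: "S \<subseteq> ideal_gen S"
  unfolding ideal_gen_def by auto
lemma ideal_gen_least: "is_ideal I \<Longrightarrow> S \<subseteq> I \<Longrightarrow> ideal_gen S \<subseteq> I"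
  unfolding ideal_gen_def by auto

lemma ideal_pow_ideal: "is_ideal (ideal_pow I t)"
  by (cases t) (simp_all add: ideal_prod_def ideal_gen_ideal ideal_UNIV)

lemma prod_in: "a \<in> I \<Longrightarrow> b \<in> J \<Longrightarrow> a * b \<in> ideal_prod I J"
  unfolding ideal_prod_def by (rule subsetD[OF ideal_gen_sup]) blast

lemma maximal_comax:
  assumes "maximal_ideal M" "a \<notin> M"
  shows "\<exists>x\<in>M. \<exists>r. x + r * a = 1"
proof -
  have iM: "is_ideal M" using assms by (simp add: maximal_ideal_def)
  define J where "J = {x + r * a | x r. x \<in> M}"
  have "is_ideal J" unfolding J_def is_ideal_def
  proof (intro conjI ballI allI)
    show "0 \<in> {x + r * a |x r. x \<in> M}" using ideal_0[OF iM] by (intro CollectI exI[of _ 0]) auto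
  next
    fix x y assume "x \<in> {x + r * a |x r. x \<in> M}" "y \<in> {x + r * a |x r. x \<in> M}"
    then obtain x1 r1 x2 r2 where "x = x1 + r1 * a" "y = x2 + r2 * a" "x1 \<in> M" "x2 \<in> M" by auto
    then show "x + y \<in> {x + r * a |x r. x \<in> M}"
      by (intro CollectI exI[of _ "x1 + x2"] exI[of _ "r1 + r2"]) (auto simp: algebra_simps ideal_add[OF iM])
  next
    fix s x assume "x \<in> {x + r * a |x r. x \<in> M}"
    then obtain x1 r1 where "x = x1 + r1 * a" "x1 \<in> M" by auto
    then show "s * x \<in> {x + r * a |x r. x \<in> M}"
      by (intro CollectI exI[of _ "s * x1"] exI[of _ "s * r1"]) (auto simp: algebra_simps ideal_multL[OF iM])
  qed
  moreover have "M \<subseteq> J"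
  proof
    fix x assume "x \<in> M" then show "x \<in> J" unfolding J_def by (intro CollectI exI[of _ x] exI[of _ 0]) simp
  qed
  moreover have "a \<in> J" unfolding J_def using ideal_0[OF iM] by (intro CollectI exI[of _ 0] exI[of _ 1]) simp
  ultimately have "J = UNIV" using assms unfolding maximal_ideal_def by blast
  then have "1 \<in> J" by simp
  then show ?thesis unfolding J_def by auto
qed

lemma maximal_prime: assumes mM: "maximal_ideal M" shows "prime_ideal M"
proof -
  have iM: "is_ideal M" using mM by (simp add: maximal_ideal_def)
  have "a \<in> M \<or> b \<in> M" if "a * b \<in> M" for a b
  proof (rule disjCI)
    assume "b \<notin> M"
    then obtain x r where "x \<in> M" "x + r * b = 1" using maximal_comax[OF mM] by blast
    then have "a = a * x + r * (a * b)" by (metis mult.commute mult.left_commute mult_1_right distrib_left)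
    moreover have "a * x + r * (a * b) \<in> M" using iM \<open>x \<in> M\<close> that by (simp add: ideal_add ideal_multL ideal_multR)
    ultimately show "a \<in> M" by simp
  qed
  then show ?thesis using mM by (simp add: prime_ideal_def maximal_ideal_def)
qed

lemma ideal_prod_ideal: "is_ideal (ideal_prod I J)"
  by (simp add: ideal_prod_def ideal_gen_ideal)

definition polyI :: "'a::comm_ring_1 set \<Rightarrow> 'a poly set" where
  "polyI I = {p. \<forall>i. coeff p i \<in> I}"

lemma polyI_ideal: assumes "is_ideal I" shows "is_ideal (polyI I)"
  unfolding is_ideal_def polyI_def using assms
  by (auto simp: coeff_mult intro!: ideal_sum ideal_multL ideal_add ideal_0)

lemma polyI_mult: "p \<in> polyI I \<Longrightarrow> q \<in> polyI J \<Longrightarrow> p * q \<in> polyI (ideal_prod I J)"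
  unfolding polyI_def
  by (auto simp: coeff_mult intro!: ideal_sum[OF ideal_prod_ideal] prod_in)

lemma polyI_UNIV: "polyI UNIV = UNIV" by (simp add: polyI_def)

lemma contract_ideal: assumes "is_ideal M" shows "is_ideal (contract M)"
  unfolding is_ideal_def contract_def
proof (intro conjI ballI allI; simp)
  show "0 \<in> M" using assms by (rule ideal_0)
next
  fix x y assume "[:x:] \<in> M" "[:y:] \<in> M"
  then show "[:x + y:] \<in> M" using ideal_add[OF assms, of "[:x:]" "[:y:]"] by simp
next
  fix r x assume "[:x:] \<in> M"
  then show "[:r * x:] \<in> M" using ideal_multL[OF assms, of "[:x:]" "[:r:]"] by (simp add: mult.commute)
qed

lemma monom_in: assumes "is_ideal M" "[:c:] \<in> M" shows "monom c n \<in> M"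
proof -
  have "monom c n = [:c:] * monom 1 n" by (simp add: smult_monom)
  then show ?thesis using ideal_multR[OF assms] by simp
qed

lemma desc:
  assumes iM: "is_ideal M"
  shows "h \<in> M \<Longrightarrow> h \<notin> polyI (contract M) \<Longrightarrow>
    \<exists>g\<in>M. lead_coeff g \<notin> contract M \<and> degree g \<le> degree h"
proof (induction "degree h" arbitrary: h rule: less_induct)
  case less
  show ?case
  proof (cases "lead_coeff h \<in> contract M")
    case False then show ?thesis using less.prems by auto
  next
    case True
    define h' where "h' = h - monom (lead_coeff h) (degree h)"
    have "h' \<in> M" using iM less.prems(1) True
      by (simp add: h'_def ideal_diff monom_in contract_def)
    have cf: "coeff h' i = (if i = degree h then 0 else coeff h i)" for i by (simp add: h'_def)
    have nI: "h' \<notin> polyI (contract M)"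
    proof
      assume "h' \<in> polyI (contract M)"
      then have h'c: "coeff h' i \<in> contract M" for i by (simp add: polyI_def)
      have "coeff h i \<in> contract M" for i
      proof (cases "i = degree h")
        case True then show ?thesis using \<open>lead_coeff h \<in> contract M\<close> by simp
      next
        case False then show ?thesis using h'c[of i] cf[of i] by simp
      qed
      then have "h \<in> polyI (contract M)" by (simp add: polyI_def)
      then show False using less.prems by simp
    qed
    have "degree h \<noteq> 0"
    proof
      assume d0: "degree h = 0"
      have "coeff h i \<in> contract M" for i
      proof (cases "i = 0")
        case True then show ?thesis using \<open>lead_coeff h \<in> contract M\<close> d0 by simp
      next
        case False then show ?thesis using d0 coeff_eq_0[of h i] ideal_0[OF contract_ideal[OF iM]] by simp
      qed
      then show False using less.prems by (simp add: polyI_def)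
    qed
    have "degree h' \<le> degree h - 1"
      by (rule degree_le) (auto simp: cf coeff_eq_0)
    then have "degree h' < degree h" using \<open>degree h \<noteq> 0\<close> by simp
    from less.hyps[OF this \<open>h' \<in> M\<close> nI] show ?thesis using \<open>degree h' < degree h\<close> by force
  qed
qed

lemma min_elem:
  assumes iM: "is_ideal M" and ex: "\<exists>h\<in>M. h \<notin> polyI (contract M)"
  shows "\<exists>g\<in>M. lead_coeff g \<notin> contract M \<and>
           (\<forall>h\<in>M. degree h < degree g \<longrightarrow> h \<in> polyI (contract M))"
proof -
  from ex desc[OF iM] obtain g0 where "g0 \<in> M \<and> lead_coeff g0 \<notin> contract M" by blast
  from ex_has_least_nat[of "\<lambda>g. g \<in> M \<and> lead_coeff g \<notin> contract M", OF this, of degree]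
  obtain g where g: "g \<in> M" "lead_coeff g \<notin> contract M"
    and mn: "\<And>y. y \<in> M \<and> lead_coeff y \<notin> contract M \<Longrightarrow> degree g \<le> degree y" by blast
  have "h \<in> polyI (contract M)" if "h \<in> M" "degree h < degree g" for h
  proof (rule ccontr)
    assume "h \<notin> polyI (contract M)"
    from desc[OF iM that(1) this] obtain g' where "g' \<in> M" "lead_coeff g' \<notin> contract M" "degree g' \<le> degree h" by blast
    with mn[of g'] that show False by simp
  qed
  then show ?thesis using g by blast
qed

lemma ex_nonP:
  fixes M :: "'a::comm_ring_1 poly set"
  assumes mM: "maximal_ideal M"
  shows "\<exists>h\<in>M. h \<notin> polyI (contract M)"
proof (rule ccontr)
  assume "\<not> ?thesis"
  then have sub: "\<And>h. h \<in> M \<Longrightarrow> coeff h i \<in> contract M" for i unfolding polyI_def by blast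
  have iM: "is_ideal M" and nU: "M \<noteq> UNIV" using mM by (auto simp: maximal_ideal_def)
  have n1: "1 \<notin> contract M" using nU ideal_one[OF iM] by (auto simp: contract_def one_pCons)
  show False
  proof (cases "[:0,1:] \<in> M")
    case True
    from sub[OF True, of 1] n1 show False by simp
  next
    case False
    from maximal_comax[OF mM False] obtain x r where "x \<in> M" "x + r * [:0,1:] = 1" by blast
    then have "coeff (x + r * [:0,1:]) 0 = 1" by simp
    then have "coeff x 0 = 1" by (simp add: mult_pCons_right)
    with sub[OF \<open>x \<in> M\<close>, of 0] n1 show False by simp
  qed
qed

lemma prime_pow: "prime_ideal N \<Longrightarrow> a ^ k \<in> N \<Longrightarrow> a \<in> N"
proof (induction k)
  case 0 then show ?case using ideal_one[of N] by (simp add: prime_ideal_def)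
next
  case (Suc k) then show ?case by (simp add: prime_ideal_def) blast
qed

lemma contract_basic:
  fixes M :: "'a::comm_ring_1 poly set"
  assumes mM: "maximal_ideal M"
  shows "prime_ideal (contract M)"
proof -
  have iM: "is_ideal M" and nU: "M \<noteq> UNIV" using mM by (auto simp: maximal_ideal_def)
  have pM: "prime_ideal M" by (rule maximal_prime[OF mM])
  have n1: "1 \<notin> contract M" using nU ideal_one[OF iM] by (auto simp: contract_def one_pCons)
  have "a \<in> contract M \<or> b \<in> contract M" if "a * b \<in> contract M" for a b
  proof -
    have "[:a:] * [:b:] \<in> M" using that by (simp add: contract_def mult.commute)
    then show ?thesis using pM by (auto simp: prime_ideal_def contract_def)
  qed
  then show ?thesis using n1 contract_ideal[OF iM] by (auto simp: prime_ideal_def)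
qed

lemma deg_ge1:
  assumes iM: "is_ideal M" and g: "g \<in> M" "lead_coeff g \<notin> contract M"
  shows "degree g \<ge> 1"
proof (rule ccontr)
  assume "\<not> degree g \<ge> 1"
  then have "degree g = 0" by simp
  then have "g = [:lead_coeff g:]" using degree_0_id[of g] by simp
  then show False using g by (simp add: contract_def)
qed

lemma key:
  fixes M :: "'a::idom poly set"
  assumes mM: "maximal_ideal M" and g: "g \<in> M" "lead_coeff g \<notin> contract M"
    and mn: "\<forall>h\<in>M. degree h < degree g \<longrightarrow> h \<in> polyI (contract M)"
    and b: "b \<notin> contract M"
  shows "\<exists>k c. lead_coeff g ^ k - b * c \<in> contract M"
proof -
  have iM: "is_ideal M" using mM by (auto simp: maximal_ideal_def)
  have d1: "degree g \<ge> 1" by (rule deg_ge1[OF iM g])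
  have g0: "g \<noteq> 0" using g ideal_0[OF contract_ideal[OF iM]] by auto
  define a where "a = lead_coeff g"
  have "[:b:] \<notin> M" using b by (simp add: contract_def)
  from maximal_comax[OF mM this] obtain x h where x: "x \<in> M" "x + h * [:b:] = 1" by blast
  obtain q r where qr: "pseudo_divmod h g = (q, r)" by (cases "pseudo_divmod h g") auto
  define k where "k = Suc (degree h) - degree g"
  have S: "smult (a ^ k) h = g * q + r" using pseudo_divmod(1)[OF g0 qr] by (simp add: a_def k_def)
  have rd: "r = 0 \<or> degree r < degree g" using pseudo_divmod(2)[OF g0 qr] .
  define e where "e = [:b:] * r - [:a ^ k:]"
  have S': "[:a ^ k:] * h = g * q + r" using S by simp
  have eq: "e = - ([:a ^ k:] * x + [:b:] * q * g)"
  proof -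
    have "r = [:a ^ k:] * h - g * q" using S' by (simp add: algebra_simps)
    then have "e = [:b:] * ([:a ^ k:] * h - g * q) - [:a ^ k:]" by (simp add: e_def)
    also have "\<dots> = [:a ^ k:] * (h * [:b:]) - [:b:] * q * g - [:a ^ k:]" by (simp add: algebra_simps)
    also have "\<dots> = [:a ^ k:] * (1 - x) - [:b:] * q * g - [:a ^ k:]"
    proof -
      have hb: "h * [:b:] = 1 - x" using x(2) by (simp add: algebra_simps)
      show ?thesis by (simp only: hb)
    qed
    also have "\<dots> = - ([:a ^ k:] * x + [:b:] * q * g)" by (simp add: algebra_simps smult_diff_right)
    finally show ?thesis .
  qed
  have "e \<in> M" unfolding eq
    by (rule ideal_neg[OF iM], rule ideal_add[OF iM], rule ideal_multL[OF iM x(1)], rule ideal_multL[OF iM g(1)])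
  have "degree ([:b:] * r) \<le> degree g - 1"
  proof -
    have "degree ([:b:] * r) \<le> degree r" using degree_mult_le[of "[:b:]" r] by simp
    moreover have "degree r \<le> degree g - 1" using rd d1 by auto
    ultimately show ?thesis by simp
  qed
  then have "degree e \<le> degree g - 1" unfolding e_def by (intro degree_diff_le) auto
  then have "degree e < degree g" using d1 by simp
  then have "e \<in> polyI (contract M)" using mn \<open>e \<in> M\<close> by blast
  then have "coeff e 0 \<in> contract M" by (simp add: polyI_def)
  then have "- coeff e 0 \<in> contract M" by (rule ideal_neg[OF contract_ideal[OF iM]])
  moreover have "- coeff e 0 = a ^ k - b * coeff r 0" by (simp add: e_def)
  ultimately have "a ^ k - b * coeff r 0 \<in> contract M" by simp
  then show ?thesis unfolding a_def by (intro exI[of _ k] exI[of _ "coeff r 0"])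
qed

lemma contract_maximal:
  fixes M :: "'a::idom poly set"
  assumes H: "hilbert_ring TYPE('a)" and mM: "maximal_ideal M"
  shows "maximal_ideal (contract M)"
proof -
  have iM: "is_ideal M" using mM by (auto simp: maximal_ideal_def)
  have pP: "prime_ideal (contract M)" by (rule contract_basic[OF mM])
  have "\<exists>g\<in>M. lead_coeff g \<notin> contract M \<and> (\<forall>h\<in>M. degree h < degree g \<longrightarrow> h \<in> polyI (contract M))"
    by (rule min_elem[OF iM ex_nonP[OF mM]])
  then obtain g where g: "g \<in> M" "lead_coeff g \<notin> contract M"
    and mn: "\<forall>h\<in>M. degree h < degree g \<longrightarrow> h \<in> polyI (contract M)" by (elim bexE conjE)
  have "prime_ideal (contract M) \<longrightarrow> (\<exists>MM. (\<forall>N\<in>MM. maximal_ideal N) \<and> contract M = \<Inter>MM)"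
    using H unfolding hilbert_ring_def by (rule spec)
  from mp[OF this pP] obtain MM where MM: "\<forall>N\<in>MM. maximal_ideal N" "contract M = \<Inter>MM"
    by (elim exE conjE)
  show ?thesis
  proof (cases "contract M \<in> MM")
    case True then show ?thesis using MM(1) by simp
  next
    case False
    have "lead_coeff g \<in> N" if N: "N \<in> MM" for N
    proof -
      have "contract M \<subseteq> N" unfolding MM(2) using N by (rule Inter_lower)
      moreover have "N \<noteq> contract M" using False N by blast
      ultimately obtain b where bN: "b \<in> N" and bP: "b \<notin> contract M" by blast
      from key[OF mM g mn bP] obtain k c where kc: "lead_coeff g ^ k - b * c \<in> contract M" by blast
      have mN: "maximal_ideal N" using MM N by blast
      have iN: "is_ideal N" using mN by (simp add: maximal_ideal_def)
      have pN: "prime_ideal N" by (rule maximal_prime[OF mN])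
      have "lead_coeff g ^ k - b * c \<in> N" using kc \<open>contract M \<subseteq> N\<close> by blast
      moreover have "b * c \<in> N" by (rule ideal_multR[OF iN bN])
      ultimately have "(lead_coeff g ^ k - b * c) + b * c \<in> N" by (rule ideal_add[OF iN])
      then have "lead_coeff g ^ k \<in> N" by simp
      then show ?thesis by (rule prime_pow[OF pN])
    qed
    then have "lead_coeff g \<in> \<Inter>MM" by blast
    then have "lead_coeff g \<in> contract M" using MM(2) by simp
    then show ?thesis using g by blast
  qed
qed

lemma monic_div:
  fixes f :: "'a::comm_ring_1 poly"
  assumes f: "coeff f d = 1" "degree f = d" "d \<ge> 1" and iI: "is_ideal I"
  shows "p \<in> polyI I \<Longrightarrow> \<exists>s r. p = f * s + r \<and> r \<in> polyI I \<and> degree r < d"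
proof (induction "degree p" arbitrary: p rule: less_induct)
  case less
  show ?case
  proof (cases "degree p < d")
    case True then show ?thesis using less.prems by (intro exI[of _ 0] exI[of _ p]) simp
  next
    case False
    define c where "c = lead_coeff p"
    define k where "k = degree p - d"
    define p' where "p' = p - monom c k * f"
    have dp: "degree p \<ge> d" using False by simp
    have cI: "c \<in> I" using less.prems by (simp add: polyI_def c_def)
    have "monom c k * f \<in> polyI I" using cI iI
      by (auto simp: polyI_def coeff_monom_mult intro: ideal_multR ideal_0)
    then have p'I: "p' \<in> polyI I" unfolding p'_def using less.prems polyI_ideal[OF iI] by (intro ideal_diff)
    have "degree p' \<le> degree p - 1"
    proof (rule degree_le, intro allI impI)
      fix i assume i: "i > degree p - 1"
      show "coeff p' i = 0"
      proof (cases "i = degree p")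
        case True
        then have "i - k = d" using dp by (simp add: k_def)
        then show ?thesis using True dp f by (simp add: p'_def coeff_monom_mult c_def k_def)
      next
        case False
        then have ip: "i > degree p" using i dp f(3) by simp
        then have "i - k > d" using dp by (simp add: k_def)
        then have "coeff p i = 0" "coeff f (i - k) = 0" using ip coeff_eq_0 f(2) by auto
        then show ?thesis by (simp add: p'_def coeff_monom_mult)
      qed
    qed
    then have "degree p' < degree p" using dp f(3) by simp
    from less.hyps[OF this p'I] obtain s r where sr: "p' = f * s + r" "r \<in> polyI I" "degree r < d" by blast
    have "p = p' + monom c k * f" by (simp add: p'_def)
    also have "\<dots> = f * (s + monom c k) + r" using sr(1) by (simp add: algebra_simps)
    finally show ?thesis using sr by blast
  qed
qed

lemma pow_sub: "ideal_pow (contract M) t \<subseteq> contract (ideal_pow M t)"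
proof (induction t)
  case 0 show ?case by (simp add: contract_def)
next
  case (Suc t)
  have sub: "{a * b |a b. a \<in> contract M \<and> b \<in> ideal_pow (contract M) t} \<subseteq> contract (ideal_pow M (Suc t))"
  proof
    fix z assume "z \<in> {a * b |a b. a \<in> contract M \<and> b \<in> ideal_pow (contract M) t}"
    then obtain a b where z: "z = a * b" "a \<in> contract M" "b \<in> ideal_pow (contract M) t" by blast
    then have "[:a:] \<in> M" "[:b:] \<in> ideal_pow M t" using Suc by (auto simp: contract_def)
    then have "[:a:] * [:b:] \<in> ideal_pow M (Suc t)" by (simp only: ideal_pow.simps prod_in)
    then show "z \<in> contract (ideal_pow M (Suc t))" using z by (simp add: contract_def mult.commute)
  qed
  have "ideal_pow (contract M) (Suc t) = ideal_gen {a * b |a b. a \<in> contract M \<and> b \<in> ideal_pow (contract M) t}"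
    by (simp add: ideal_prod_def)
  then show ?case using ideal_gen_least[OF contract_ideal[OF ideal_pow_ideal[of M "Suc t"]] sub] by simp
qed

lemma stepB:
  fixes M :: "'a::idom poly set"
  assumes mM: "maximal_ideal M" and mP: "maximal_ideal (contract M)"
  shows "contract (ideal_pow M t) \<subseteq> ideal_pow (contract M) t"
proof -
  define P where "P = contract M"
  have iM: "is_ideal M" using mM by (auto simp: maximal_ideal_def)
  have iP: "is_ideal P" unfolding P_def by (rule contract_ideal[OF iM])
  have "\<exists>g\<in>M. lead_coeff g \<notin> P \<and> (\<forall>h\<in>M. degree h < degree g \<longrightarrow> h \<in> polyI P)"
    unfolding P_def by (rule min_elem[OF iM ex_nonP[OF mM]])
  then obtain g where g: "g \<in> M" "lead_coeff g \<notin> P"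
    and mn: "\<forall>h\<in>M. degree h < degree g \<longrightarrow> h \<in> polyI P" by blast
  define d where "d = degree g"
  define a where "a = lead_coeff g"
  have d1: "d \<ge> 1" unfolding d_def using deg_ge1[OF iM g[unfolded P_def]] .
  from maximal_comax[OF mP g(2)[unfolded P_def]] obtain x u
    where xu: "x \<in> P" "x + u * a = 1" unfolding P_def a_def by blast
  define f where "f = smult u g + monom x d"
  have fM: "f \<in> M"
  proof -
    have "smult u g = [:u:] * g" by simp
    moreover have "monom x d \<in> M" using xu(1) iM by (intro monom_in) (auto simp: P_def contract_def)
    ultimately show ?thesis unfolding f_def using iM g(1) by (metis ideal_add ideal_multL)
  qed
  have cf: "coeff f d = 1" using xu(2) by (simp add: f_def a_def d_def algebra_simps)
  have "degree (smult u g) \<le> d" using degree_smult_le[of u g] by (simp add: d_def)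
  moreover have "degree (monom x d) \<le> d" by (rule degree_monom_le)
  ultimately have "degree f \<le> d" unfolding f_def by (rule degree_add_le)
  moreover have "d \<le> degree f" using cf by (intro le_degree) simp
  ultimately have df: "degree f = d" by simp
  have f0: "f \<noteq> 0" using cf by auto
  have divM: "\<exists>p q. h = p + f * q \<and> p \<in> polyI P" if h: "h \<in> M" for h
  proof -
    from monic_div[OF cf df d1 ideal_UNIV, of h] obtain s r
      where sr: "h = f * s + r" "degree r < d" by (auto simp: polyI_UNIV)
    have "r = h - f * s" using sr by simp
    then have "r \<in> M" using h fM iM by (metis ideal_diff ideal_multR)
    then have "r \<in> polyI P" using mn sr(2) d_def by blast
    then show ?thesis using sr(1) by (intro exI[of _ r] exI[of _ s]) (simp add: algebra_simps)
  qed
  define S where "S t = {p + f * q | p q. p \<in> polyI (ideal_pow P t)}" for t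
  have Sid: "is_ideal (S t)" for t
  proof -
    have J: "is_ideal (polyI (ideal_pow P t))" by (rule polyI_ideal[OF ideal_pow_ideal])
    show ?thesis unfolding is_ideal_def S_def
    proof (intro conjI ballI allI)
      show "0 \<in> {p + f * q |p q. p \<in> polyI (ideal_pow P t)}"
        using ideal_0[OF J] by (intro CollectI exI[of _ 0] exI[of _ 0]) simp
    next
      fix y z assume "y \<in> {p + f * q |p q. p \<in> polyI (ideal_pow P t)}" "z \<in> {p + f * q |p q. p \<in> polyI (ideal_pow P t)}"
      then obtain p1 q1 p2 q2 where "y = p1 + f * q1" "z = p2 + f * q2" "p1 \<in> polyI (ideal_pow P t)" "p2 \<in> polyI (ideal_pow P t)" by blast
      then show "y + z \<in> {p + f * q |p q. p \<in> polyI (ideal_pow P t)}"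
        using ideal_add[OF J] by (intro CollectI exI[of _ "p1 + p2"] exI[of _ "q1 + q2"]) (simp add: algebra_simps)
    next
      fix r y assume "y \<in> {p + f * q |p q. p \<in> polyI (ideal_pow P t)}"
      then obtain p1 q1 where "y = p1 + f * q1" "p1 \<in> polyI (ideal_pow P t)" by blast
      then show "r * y \<in> {p + f * q |p q. p \<in> polyI (ideal_pow P t)}"
        using ideal_multL[OF J] by (intro CollectI exI[of _ "r * p1"] exI[of _ "r * q1"]) (simp add: algebra_simps)
    qed
  qed
  have MS: "ideal_pow M t \<subseteq> S t" for t
  proof (induction t)
    case 0
    show ?case
    proof
      fix z :: "'a poly" show "z \<in> S 0" unfolding S_def
        by (intro CollectI exI[of _ z] exI[of _ 0]) (simp add: polyI_UNIV)
    qed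
  next
    case (Suc t)
    show ?case unfolding ideal_pow.simps(2) ideal_prod_def
    proof (rule ideal_gen_least[OF Sid], rule subsetI)
      fix z assume "z \<in> {a * b |a b. a \<in> M \<and> b \<in> ideal_pow M t}"
      then obtain y w where z: "z = y * w" "y \<in> M" "w \<in> ideal_pow M t" by blast
      from divM[OF z(2)] obtain p1 q1 where 1: "y = p1 + f * q1" "p1 \<in> polyI P" by blast
      from z(3) Suc obtain p2 q2 where 2: "w = p2 + f * q2" "p2 \<in> polyI (ideal_pow P t)"
        unfolding S_def by blast
      have "p1 * p2 \<in> polyI (ideal_pow P (Suc t))" using polyI_mult[OF 1(2) 2(2)] by simp
      moreover have "z = p1 * p2 + f * (q1 * p2 + p1 * q2 + f * q1 * q2)"
        using z(1) 1(1) 2(1) by (simp add: algebra_simps)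
      ultimately show "z \<in> S (Suc t)" unfolding S_def by blast
    qed
  qed
  show ?thesis
  proof
    fix c assume "c \<in> contract (ideal_pow M t)"
    then have "[:c:] \<in> S t" using MS by (auto simp: contract_def)
    then obtain p q where pq: "[:c:] = p + f * q" "p \<in> polyI (ideal_pow P t)" unfolding S_def by blast
    from monic_div[OF cf df d1 ideal_pow_ideal pq(2)] obtain s r
      where sr: "p = f * s + r" "r \<in> polyI (ideal_pow P t)" "degree r < d" by blast
    have eq: "[:c:] - r = f * (q + s)" using pq(1) sr(1) by (simp add: algebra_simps)
    have "q + s = 0"
    proof (rule ccontr)
      assume "q + s \<noteq> 0"
      then have "degree (f * (q + s)) \<ge> d" using degree_mult_eq[OF f0] df by simp
      moreover have "degree ([:c:] - r) \<le> d - 1" using sr(3) by (intro degree_diff_le) auto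
      ultimately show False using eq d1 by simp
    qed
    then have "[:c:] = r" using eq by simp
    then have "c = coeff r 0" by (metis coeff_pCons_0)
    then show "c \<in> ideal_pow (contract M) t" using sr(2) by (simp add: polyI_def P_def)
  qed
qed

theorem mainTheorem14:
  assumes "hilbert_ring TYPE('a::idom)"
  shows "\<forall>M :: 'a poly set. maximal_ideal M \<longrightarrow> power_stable M"
proof (intro allI impI)
  fix M :: "'a poly set" assume mM: "maximal_ideal M"
  have mP: "maximal_ideal (contract M)" by (rule contract_maximal[OF assms mM])
  show "power_stable M" unfolding power_stable_def
    using stepB[OF mM mP] pow_sub[of M] by blast
qed

end
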